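(* Let $X\subseteq\{0,1\}^n$ be a nonempty set and let $U=\{c_1,\dots,c_m\}\subseteq\mathbb{R}^{n+1}$ be a finite set of scenarios, $c_j=(\tilde c_j,\bar c_j)$ with $\tilde c_j\in\mathbb{R}$, $\bar c_j\in\mathbb{R}^n$, and $f(x)=\max_{j=1,\dots,m}\,\bar c_j^\top x+\tilde c_j$. Assume that all scenarios are perturbed by a continuously distributed random vector in $\mathbb{R}^{m(n+1)}$ with full-dimensional support (i.e. all $m(n+1)$ entries $\tilde c_j,\bar c_j$ are replaced by their perturbed values). Then, with probability one, in each iteration $k$ of Algorithm SD (described in the context) the set $\partial f(x^k)\cap(-\mathcal{N}_{\operatorname{conv}(V^k)}(x^k))$ is a singleton.
   Context: For a convex function $f$, $\partial f(x)$ denotes its subdifferential at $x$. For a convex set $C$ and $x\in C$, $\mathcal{N}_C(x)=\{d\in\mathbb{R}^n: d^\top(y-x)\le 0\ \forall y\in C\}$ is the normal cone of $C$ at $x$. Algorithm SD: pick any $\hat x^0\in X$ and set $V^1=\{\hat x^0\}$. For $k=1,2,\dots$: compute $\alpha^k\in\mathbb{R}^{V^k}_+$ with $\sum_{v\in V^k}\alpha^k_v=1$, the point $x^k=\sum_{v\in V^k}\alpha^k_v v$ minimizing $f$ over $\operatorname{conv}(V^k)$, and a vector $c^k\in\partial f(x^k)\cap(-\mathcal{N}_{\operatorname{conv}(V^k)}(x^k))$ (in this finite case, $(x^k,\alpha^k)$ together with $z^k=f(x^k)$ is obtained as a basic optimal solution of the linear program $\min\{z:\ \bar c_j^\top x+\tilde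 c_j\le z\ (j=1,\dots,m),\ x=\sum_{v\in V^k}\alpha_v v,\ \alpha\ge 0,\ \sum_{v\in V^k}\alpha_v=1\}$); then compute a minimizer $\hat x^k$ of $\min_{x\in X}(c^k)^\top x$. If $(c^k)^\top\hat x^k\ge (c^k)^\top x^k$, stop and output $x^k$; otherwise set $V^{k+1}:=V^k\cup\{\hat x^k\}$ and continue. *)

theory Defs
  imports "HOL-Probability.Probability"
begin

text \<open>Scenario data: a pair (ct, cb) with ct $ j = tilde c_j and cb $ j = bar c_j.\<close>

definition maxfun :: "real^'m::finite \<Rightarrow> real^'n::finite^'m \<Rightarrow> real^'n \<Rightarrow> real" where
  "maxfun ct cb x = Max ((\<lambda>j. cb $ j \<bullet> x + ct $ j) ` UNIV)"

definition subdiff :: "(real^'n::finite \<Rightarrow> real) \<Rightarrow> real^'n \<Rightarrow> (real^'n) set" where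
  "subdiff f x = {g. \<forall>y. f y \<ge> f x + g \<bullet> (y - x)}"

definition normal_cone :: "(real^'n::finite) set \<Rightarrow> real^'n \<Rightarrow> (real^'n) set" where
  "normal_cone C x = {d. \<forall>y\<in>C. d \<bullet> (y - x) \<le> 0}"

definition sd_set :: "real^'m::finite \<Rightarrow> real^'n::finite^'m \<Rightarrow> (real^'n) set \<Rightarrow> real^'n \<Rightarrow> (real^'n) set" where
  "sd_set ct cb V x = subdiff (maxfun ct cb) x \<inter> uminus ` normal_cone (convex hull V) x"

text \<open>A (finite prefix of a) run of Algorithm SD with iterations 1..N:
  V k = V^k, x k = x^k, c k = c^k, xh k = hat x^k (xh 0 = hat x^0).
  For k < N the stopping test failed, so the algorithm continued.\<close>
definition sd_run ::
  "real^'m::finite \<Rightarrow> real^'n::finite^'m \<Rightarrow> (real^'n) set \<Rightarrow> nat \<Rightarrow>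
   (nat \<Rightarrow> (real^'n) set) \<Rightarrow> (nat \<Rightarrow> real^'n) \<Rightarrow> (nat \<Rightarrow> real^'n) \<Rightarrow> (nat \<Rightarrow> real^'n) \<Rightarrow> bool" where
  "sd_run ct cb X N V x c xh \<longleftrightarrow>
     xh 0 \<in> X \<and> V 1 = {xh 0} \<and>
     (\<forall>k\<in>{1..N}.
        x k \<in> convex hull (V k) \<and> (\<forall>y\<in>convex hull (V k). maxfun ct cb (x k) \<le> maxfun ct cb y) \<and>
        c k \<in> sd_set ct cb (V k) (x k) \<and>
        xh k \<in> X \<and> (\<forall>y\<in>X. c k \<bullet> xh k \<le> c k \<bullet> y)) \<and>
     (\<forall>k\<in>{1..<N}. c k \<bullet> xh k < c k \<bullet> x k \<and> V (Suc k) = insert (xh k) (V k))"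

end

theory Submission
  imports Defs
begin


lemma differentiable_vec_lambda:
  fixes F :: "'k::finite \<Rightarrow> 'a::real_normed_vector \<Rightarrow> real"
  assumes "\<And>j. F j differentiable (at z within S)"
  shows "(\<lambda>z. \<chi> j. F j z) differentiable (at z within S)"
proof -
  have "(\<lambda>z. \<chi> j. F j z) = (\<lambda>z. \<Sum>j\<in>UNIV. F j z *\<^sub>R axis j (1::real))"
  proof
    fix z show "(\<chi> j. F j z) = (\<Sum>j\<in>UNIV. F j z *\<^sub>R axis j (1::real))"
      using basis_expansion[of "\<chi> j. F j z"] by (simp add: scalar_mult_eq_scaleR)
  qed
  then show ?thesis using assms by (auto intro!: differentiable_sum differentiable_scaleR)
qed

lemma differentiable_fst_nth:
  fixes j :: "'k::finite"
  shows "(\<lambda>z::('a::real_normed_vector^'k) \<times> 'b::real_normed_vector. fst z $ j) differentiable (at z within S)"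
proof -
  have "bounded_linear (\<lambda>z::('a::real_normed_vector^'k::finite) \<times> 'b::real_normed_vector. fst z $ j)"
    by (intro bounded_linear_compose[OF bounded_linear_vec_nth] bounded_linear_fst)
  then show ?thesis by (rule bounded_linear_imp_differentiable)
qed

lemma differentiable_snd_nth:
  fixes j :: "'k::finite"
  shows "(\<lambda>z::'b::real_normed_vector \<times> ('a::real_normed_vector^'k). snd z $ j) differentiable (at z within S)"
proof -
  have "bounded_linear (\<lambda>z::'b::real_normed_vector \<times> ('a::real_normed_vector^'k::finite). snd z $ j)"
    by (intro bounded_linear_compose[OF bounded_linear_vec_nth] bounded_linear_snd)
  then show ?thesis by (rule bounded_linear_imp_differentiable)
qed

lemma negl_bad1:
  fixes T :: "(real^'n::finite) set" and j0 :: "'m::finite" and \<iota> :: "real^'n \<Rightarrow> 'm"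
  assumes "finite T" "T \<noteq> {}" "inj_on \<iota> T" "j0 \<notin> \<iota> ` T"
  shows "negligible {z::(real^'m) \<times> (real^'n^'m). \<exists>\<mu>. sum \<mu> T = 1 \<and>
     (\<forall>y\<in>T. fst z $ (\<iota> y) = fst z $ j0 + (snd z $ j0 - snd z $ (\<iota> y)) \<bullet> (\<Sum>w\<in>T. \<mu> w *\<^sub>R w))}"
    (is "negligible ?B")
proof -
  define a :: "(real^'m) \<times> (real^'n^'m)" where "a = (\<chi> j. if j \<in> \<iota>`T then 1 else 0, 0)"
  define H where "H = {z. a \<bullet> z = 1}"
  define \<Phi> :: "(real^'m) \<times> (real^'n^'m) \<Rightarrow> (real^'m) \<times> (real^'n^'m)" where
    "\<Phi> = (\<lambda>z. ((\<chi> j. if j \<in> \<iota>`T then fst z $ j0 + (snd z $ j0 - snd z $ j) \<bullet> (\<Sum>y\<in>T. fst z $ (\<iota> y) *\<^sub>R y) else fst z $ j), snd z))"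
  have aH: "a \<bullet> z = (\<Sum>y\<in>T. fst z $ (\<iota> y))" for z
  proof -
    have "a \<bullet> z = (\<Sum>j\<in>UNIV. (if j \<in> \<iota>`T then 1 else 0) * fst z $ j)"
      by (simp add: a_def inner_prod_def inner_vec_def)
    also have "\<dots> = (\<Sum>j\<in>UNIV. if j \<in> \<iota>`T then fst z $ j else 0)"
      by (intro sum.cong) auto
    also have "\<dots> = (\<Sum>j\<in>\<iota>`T. fst z $ j)"
      by (simp add: sum.If_cases)
    also have "\<dots> = (\<Sum>y\<in>T. fst z $ (\<iota> y))"
      using assms(3) by (simp add: sum.reindex)
    finally show ?thesis .
  qed
  have "a \<noteq> 0"
  proof
    assume "a = 0"
    obtain y where "y \<in> T" using assms(2) by blast
    then have "fst a $ (\<iota> y) = 1" by (simp add: a_def)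
    with \<open>a = 0\<close> show False by simp
  qed
  then have nH: "negligible H" unfolding H_def by (intro negligible_hyperplane) simp
  have dH: "\<Phi> differentiable_on H"
    unfolding differentiable_on_def \<Phi>_def
    apply (intro ballI differentiable_Pair differentiable_vec_lambda)
    subgoal for z j using assms(1) by (cases "j \<in> \<iota>`T") (simp_all, auto intro!: differentiable_add differentiable_inner differentiable_diff differentiable_sum
          differentiable_scaleR differentiable_fst_nth differentiable_snd_nth
          bounded_linear_imp_differentiable[OF bounded_linear_snd])
    by (auto intro!: bounded_linear_imp_differentiable[OF bounded_linear_snd])
  have sub: "?B \<subseteq> \<Phi> ` H"
  proof
    fix z assume "z \<in> ?B"
    then obtain \<mu> where \<mu>1: "sum \<mu> T = 1" and
      \<mu>: "\<And>y. y \<in> T \<Longrightarrow> fst z $ (\<iota> y) = fst z $ j0 + (snd z $ j0 - snd z $ (\<iota> y)) \<bullet> (\<Sum>w\<in>T. \<mu> w *\<^sub>R w)"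
      by blast
    define s :: "real^'m" where "s = (\<chi> j. if j \<in> \<iota>`T then \<mu> (the_inv_into T \<iota> j) else fst z $ j)"
    have s\<iota>: "s $ (\<iota> y) = \<mu> y" if "y \<in> T" for y
      using that assms(3) by (simp add: s_def the_inv_into_f_f)
    have sj0: "s $ j0 = fst z $ j0" using assms(4) by (simp add: s_def)
    have "(s, snd z) \<in> H"
      unfolding H_def using aH[of "(s, snd z)"] s\<iota> \<mu>1 by simp
    moreover have "\<Phi> (s, snd z) = z"
    proof -
      have sumeq: "(\<Sum>y\<in>T. s $ (\<iota> y) *\<^sub>R y) = (\<Sum>w\<in>T. \<mu> w *\<^sub>R w)"
        using s\<iota> by (intro sum.cong) auto
      have "fst (\<Phi> (s, snd z)) $ j = fst z $ j" for j
      proof (cases "j \<in> \<iota>`T")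
        case True
        then obtain y where y: "y \<in> T" "j = \<iota> y" by blast
        show ?thesis unfolding \<Phi>_def using True y \<mu>[OF y(1)] sj0 sumeq by simp
      next
        case False
        then show ?thesis unfolding \<Phi>_def by (simp add: s_def)
      qed
      then have "fst (\<Phi> (s, snd z)) = fst z" by (simp add: vec_eq_iff)
      then show ?thesis by (simp add: \<Phi>_def prod_eq_iff)
    qed
    ultimately show "z \<in> \<Phi> ` H" by (metis image_eqI)
  qed
  have "negligible (\<Phi> ` H)"
    by (rule negligible_differentiable_image_negligible[OF order_refl nH dH])
  then show ?thesis using sub negligible_subset by blast
qed

lemma differentiable_vec_lambda_vec:
  fixes F :: "'k::finite \<Rightarrow> 'a::real_normed_vector \<Rightarrow> real^'l::finite"
  assumes "\<And>j. F j differentiable (at z within S)"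
  shows "(\<lambda>z. \<chi> j. F j z) differentiable (at z within S)"
proof -
  have "(\<lambda>z. \<chi> j. F j z) = (\<lambda>z. \<Sum>j\<in>UNIV. \<Sum>i\<in>UNIV. (F j z $ i) *\<^sub>R axis j (axis i (1::real)))"
  proof
    fix z
    show "(\<chi> j. F j z) = (\<Sum>j\<in>UNIV. \<Sum>i\<in>UNIV. (F j z $ i) *\<^sub>R axis j (axis i (1::real)))"
    proof (subst vec_eq_iff, intro allI)
      fix j'
      have "(\<Sum>j\<in>UNIV. \<Sum>i\<in>UNIV. (F j z $ i) *\<^sub>R axis j (axis i (1::real))) $ j'
          = (\<Sum>j\<in>UNIV. \<Sum>i\<in>UNIV. (F j z $ i) *\<^sub>R (axis j (axis i (1::real)) $ j'))"
        by (simp add: sum_component)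
      also have "\<dots> = (\<Sum>j\<in>UNIV. if j = j' then (\<Sum>i\<in>UNIV. (F j z $ i) *\<^sub>R axis i (1::real)) else 0)"
      proof (intro sum.cong refl)
        fix j
        show "(\<Sum>i\<in>UNIV. (F j z $ i) *\<^sub>R (axis j (axis i (1::real)) $ j')) =
              (if j = j' then (\<Sum>i\<in>UNIV. (F j z $ i) *\<^sub>R axis i (1::real)) else 0)"
        proof (cases "j = j'")
          case False
          then have "axis j (axis i (1::real)) $ j' = 0" for i :: 'l
            unfolding axis_def[of j] by simp
          then show ?thesis using False by simp
        qed simp
      qed
      also have "\<dots> = (\<Sum>i\<in>UNIV. (F j' z $ i) *\<^sub>R axis i (1::real))"
        by simp
      also have "\<dots> = F j' z"
        using basis_expansion[of "F j' z"] by (simp add: scalar_mult_eq_scaleR)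
      finally show "(\<chi> j. F j z) $ j' = (\<Sum>j\<in>UNIV. \<Sum>i\<in>UNIV. (F j z $ i) *\<^sub>R axis j (axis i (1::real))) $ j'"
        by simp
    qed
  qed
  moreover have "(\<lambda>z. F j z $ i) differentiable (at z within S)" for j i
    unfolding cart_eq_inner_axis using assms by (auto intro!: differentiable_inner)
  ultimately show ?thesis by (auto intro!: differentiable_sum differentiable_scaleR)
qed

lemma negl_bad2:
  fixes T :: "(real^'n::finite) set" and y0 :: "real^'n" and j1 :: "'m::finite" and A :: "'m set"
  assumes fT: "finite T" and indT: "\<not> affine_dependent T" and y0: "y0 \<in> T" and j1: "j1 \<in> A"
    and cardA: "card A \<le> card T"
  shows "negligible {z::(real^'m) \<times> (real^'n^'m). \<exists>lm. lm j1 \<noteq> 0 \<and> sum lm A = 0 \<and>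
     (\<forall>y\<in>T. (\<Sum>j\<in>A. lm j *\<^sub>R snd z $ j) \<bullet> (y - y0) = 0)}"
    (is "negligible ?B")
proof -
  define W where "W = (\<lambda>y. y - y0) ` (T - {y0})"
  have tr: "(\<lambda>x. -y0 + x) = (\<lambda>y. y - y0)" by (rule ext) simp
  have indW: "independent W"
    using indT affine_dependent_iff_dependent2[OF y0] unfolding W_def tr by simp
  have cardW: "card W = card T - 1"
    unfolding W_def using fT y0 by (subst card_image) (auto simp: inj_on_def)
  obtain B where BW: "B \<subseteq> span W" and orthB: "pairwise orthogonal B"
    and nB: "\<And>x. x \<in> B \<Longrightarrow> norm x = 1" and indB: "independent B"
    and cardB: "card B = dim (span W)" and spanB: "span B = span W"
    using orthonormal_basis_subspace[OF subspace_span] by metis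
  have cardB': "card B = card T - 1"
    using cardB dim_span dim_eq_card_independent[OF indW] cardW by simp
  have finB: "finite B" using indB independent_imp_finite by blast
  define A' where "A' = A - {j1}"
  show ?thesis
  proof (cases "A' = {}")
    case True
    then have "A = {j1}" using j1 unfolding A'_def by blast
    then have "?B = {}" by auto
    then show ?thesis by (metis negligible_empty)
  next
    case False
    have "card A' \<le> card B"
      using cardA cardB' j1 unfolding A'_def by (simp add: card_Diff_singleton)
    then obtain \<kappa> where \<kappa>B: "\<kappa> ` A' \<subseteq> B" and inj\<kappa>: "inj_on \<kappa> A'"
      using card_le_inj[of A' B] finB by auto
    have orth\<kappa>: "\<kappa> j \<bullet> \<kappa> k = (if j = k then 1 else 0)" if "j \<in> A'" "k \<in> A'" for j k
    proof (cases "j = k")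
      case True
      then show ?thesis using nB[of "\<kappa> j"] \<kappa>B that by (auto simp: norm_eq_1)
    next
      case False
      then have "\<kappa> j \<noteq> \<kappa> k" using inj\<kappa> that by (auto simp: inj_on_def)
      then show ?thesis using orthB \<kappa>B that False
        by (auto simp: pairwise_def orthogonal_def)
    qed
    define e where "e = (\<Sum>k\<in>A'. \<kappa> k)"
    have ve: "v \<bullet> e = (\<Sum>k\<in>A'. v \<bullet> \<kappa> k)" for v
      unfolding e_def by (simp add: inner_sum_right)
    obtain k0 where k0: "k0 \<in> A'" using False by blast
    have "e \<bullet> \<kappa> k0 = 1"
    proof -
      have "e \<bullet> \<kappa> k0 = (\<Sum>k\<in>A'. \<kappa> k \<bullet> \<kappa> k0)" unfolding e_def by (simp add: inner_sum_left)
      also have "\<dots> = (\<Sum>k\<in>A'. if k = k0 then 1 else 0)"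
        using orth\<kappa> k0 by (intro sum.cong) auto
      also have "\<dots> = 1" using k0 by simp
      finally show ?thesis .
    qed
    then have "e \<noteq> 0" by auto
    define a :: "(real^'m) \<times> (real^'n^'m)" where "a = (0, \<chi> j. if j = j1 then e else 0)"
    have aH: "a \<bullet> z = snd z $ j1 \<bullet> e" for z
    proof -
      have "a \<bullet> z = (\<Sum>j\<in>UNIV. (if j = j1 then e else 0) \<bullet> snd z $ j)"
        by (simp add: a_def inner_prod_def inner_vec_def)
      also have "\<dots> = (\<Sum>j\<in>UNIV. if j = j1 then e \<bullet> snd z $ j else 0)"
        by (intro sum.cong) auto
      also have "\<dots> = snd z $ j1 \<bullet> e" by (simp add: inner_commute)
      finally show ?thesis .
    qed
    have "a \<noteq> 0"
    proof
      assume "a = 0"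
      then have "snd a $ j1 = 0" by simp
      then show False using \<open>e \<noteq> 0\<close> by (simp add: a_def)
    qed
    define H where "H = {z. a \<bullet> z = 1}"
    have nH: "negligible H" unfolding H_def using \<open>a \<noteq> 0\<close> by (intro negligible_hyperplane) simp
    define F where "F = (\<lambda>cb::real^'n^'m. cb $ j1 - (\<Sum>k\<in>A'. (cb $ j1 \<bullet> \<kappa> k) *\<^sub>R \<kappa> k)
                          + (\<Sum>k\<in>A'. (cb $ j1 \<bullet> \<kappa> k) *\<^sub>R cb $ k))"
    define \<Phi> :: "(real^'m) \<times> (real^'n^'m) \<Rightarrow> (real^'m) \<times> (real^'n^'m)" where
      "\<Phi> = (\<lambda>z. (fst z, \<chi> j. if j = j1 then F (snd z) else snd z $ j))"
    have dH: "\<Phi> differentiable_on H"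
      unfolding differentiable_on_def \<Phi>_def F_def
      apply (intro ballI differentiable_Pair differentiable_vec_lambda_vec)
       apply (auto intro!: bounded_linear_imp_differentiable[OF bounded_linear_fst])[1]
      subgoal for z j by (cases "j = j1") (simp_all, auto intro!: differentiable_add differentiable_inner differentiable_diff differentiable_sum
          differentiable_scaleR differentiable_snd_nth)
      done
    have sub: "?B \<subseteq> \<Phi> ` H"
    proof
      fix z assume "z \<in> ?B"
      then obtain lm where l1: "lm j1 \<noteq> 0" and l2: "sum lm A = 0"
        and l3: "\<And>y. y \<in> T \<Longrightarrow> (\<Sum>j\<in>A. lm j *\<^sub>R snd z $ j) \<bullet> (y - y0) = 0"
        by blast
      define cb where "cb = snd z"
      define l' where "l' = (\<lambda>j. - lm j / lm j1)"
      have finA: "finite A" by simp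
      have sumA: "sum f A = f j1 + sum f A'" for f :: "'m \<Rightarrow> 'b::comm_monoid_add"
        unfolding A'_def using j1 finA by (simp add: sum.remove)
      have l'1: "sum l' A' = 1"
      proof -
        have "sum lm A' = - lm j1" using l2 sumA[of lm] by simp
        then show ?thesis unfolding l'_def using l1 by (simp add: sum_divide_distrib[symmetric] sum_negf)
      qed
      define u where "u = cb $ j1 - (\<Sum>k\<in>A'. l' k *\<^sub>R cb $ k)"
      have u_eq: "u = (1 / lm j1) *\<^sub>R (\<Sum>j\<in>A. lm j *\<^sub>R cb $ j)"
        unfolding u_def l'_def sumA using l1
        by (simp add: scaleR_right_distrib scaleR_sum_right sum_negf algebra_simps)
      have uW: "u \<bullet> w = 0" if "w \<in> W" for w
        using that l3 unfolding W_def u_eq cb_def by auto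
      have uB: "u \<bullet> b = 0" if "b \<in> B" for b
      proof -
        have "b \<in> span W" using that BW by blast
        then have "orthogonal u b"
          by (rule orthogonal_to_span) (use uW in \<open>auto simp: orthogonal_def\<close>)
        then show ?thesis by (simp add: orthogonal_def)
      qed
      define v where "v = u + (\<Sum>k\<in>A'. l' k *\<^sub>R \<kappa> k)"
      have v\<kappa>: "v \<bullet> \<kappa> k = l' k" if "k \<in> A'" for k
      proof -
        have "v \<bullet> \<kappa> k = u \<bullet> \<kappa> k + (\<Sum>k'\<in>A'. l' k' * (\<kappa> k' \<bullet> \<kappa> k))"
          unfolding v_def by (simp add: inner_add_left inner_sum_left)
        also have "\<dots> = (\<Sum>k'\<in>A'. if k' = k then l' k' else 0)"
        proof -
          have "u \<bullet> \<kappa> k = 0" using uB[of "\<kappa> k"] \<kappa>B that by blast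
          moreover have "(\<Sum>k'\<in>A'. l' k' * (\<kappa> k' \<bullet> \<kappa> k)) = (\<Sum>k'\<in>A'. if k' = k then l' k' else 0)"
            using that orth\<kappa> by (intro sum.cong) auto
          ultimately show ?thesis by simp
        qed
        also have "\<dots> = l' k" using that by simp
        finally show ?thesis .
      qed
      define cb' where "cb' = (\<chi> j. if j = j1 then v else cb $ j)"
      have "(fst z, cb') \<in> H"
        unfolding H_def using aH[of "(fst z, cb')"] ve[of v] v\<kappa> l'1 by (simp add: cb'_def)
      moreover have "\<Phi> (fst z, cb') = z"
      proof -
        have cbk: "cb' $ k = cb $ k" if "k \<in> A'" for k using that unfolding cb'_def A'_def by auto
        have "F cb' = v - (\<Sum>k\<in>A'. l' k *\<^sub>R \<kappa> k) + (\<Sum>k\<in>A'. l' k *\<^sub>R cb $ k)"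
          unfolding F_def using v\<kappa> cbk by (simp add: cb'_def cong: sum.cong)
        also have "\<dots> = cb $ j1" unfolding v_def u_def by simp
        finally have "F cb' = cb $ j1" .
        then have "(\<chi> j. if j = j1 then F cb' else cb' $ j) = cb"
          by (simp add: vec_eq_iff cb'_def)
        moreover have "\<Phi> (fst z, cb') = (fst z, \<chi> j. if j = j1 then F cb' else cb' $ j)"
          unfolding \<Phi>_def snd_conv fst_conv by (rule refl)
        ultimately show ?thesis unfolding cb_def by simp
      qed
      ultimately show "z \<in> \<Phi> ` H" by (metis image_eqI)
    qed
    have "negligible (\<Phi> ` H)"
      by (rule negligible_differentiable_image_negligible[OF order_refl nH dH])
    then show ?thesis using sub negligible_subset by blast
  qed
qed


lemma min_rep:
  fixes V :: "'a::euclidean_space set"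
  assumes fV: "finite V" and xV: "x \<in> convex hull V"
  shows "\<exists>T u. T \<subseteq> V \<and> finite T \<and> T \<noteq> {} \<and> \<not> affine_dependent T \<and> (\<forall>y\<in>T. 0 < u y) \<and>
            sum u T = 1 \<and> (\<Sum>y\<in>T. u y *\<^sub>R y) = x"
proof -
  let ?P = "\<lambda>n. \<exists>S u. finite S \<and> card S = n \<and> S \<subseteq> V \<and> (\<forall>x\<in>S. 0 \<le> u x) \<and>
    sum u S = 1 \<and> (\<Sum>v\<in>S. u v *\<^sub>R v) = x"
  obtain u0 where "(\<forall>x\<in>V. 0 \<le> u0 x) \<and> sum u0 V = 1 \<and> (\<Sum>v\<in>V. u0 v *\<^sub>R v) = x"
    using xV convex_hull_finite[OF fV] by auto
  then have "?P (card V)" using fV by blast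
  then have "\<exists>n\<le>card V. (\<forall>k<n. \<not> ?P k) \<and> ?P n"
    by (rule_tac ex_least_nat_le, auto)
  then obtain n where "?P n" and smallest: "\<forall>k<n. \<not> ?P k"
    by blast
  then obtain S u where S: "finite S" "card S = n" "S\<subseteq>V"
    and u: "\<forall>x\<in>S. 0 \<le> u x" "sum u S = 1"  "(\<Sum>v\<in>S. u v *\<^sub>R v) = x" by auto
  have Sne: "S \<noteq> {}" using u(2) by auto
  have pos: "\<forall>y\<in>S. 0 < u y"
  proof (rule ccontr)
    assume "\<not> (\<forall>y\<in>S. 0 < u y)"
    then obtain a where a: "a \<in> S" "u a = 0" using u(1) by force
    have "?P (n - 1)"
      apply (rule_tac x="S - {a}" in exI)
      apply (rule_tac x="u" in exI)
      using S u a by (auto simp: sum_diff1)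
    moreover have "n - 1 < n" using S a by (metis Sne card_gt_0_iff diff_less zero_less_one)
    ultimately show False using smallest by blast
  qed
  have "\<not> affine_dependent S"
  proof
    assume "affine_dependent S"
    then obtain w v where wv: "sum w S = 0" "v\<in>S" "w v \<noteq> 0" "(\<Sum>v\<in>S. w v *\<^sub>R v) = 0"
      using affine_dependent_explicit_finite[OF S(1)] by auto
    define i where "i = (\<lambda>v. (u v) / (- w v)) ` {v\<in>S. w v < 0}"
    define t where "t = Min i"
    have "\<exists>x\<in>S. w x < 0"
      by (smt (verit, best) S(1) sum_pos2 wv)
    then have "i \<noteq> {}" unfolding i_def by auto
    then have "t \<ge> 0"
      using Min_ge_iff[of i 0] and S(1) u[unfolded le_less]
      unfolding t_def i_def
      by (auto simp: divide_le_0_iff)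
    have t: "\<forall>v\<in>S. u v + t * w v \<ge> 0"
    proof
      fix v
      assume "v \<in> S"
      then have v: "0 \<le> u v"
        using u(1) by blast
      show "0 \<le> u v + t * w v"
      proof (cases "w v < 0")
        case False
        thus ?thesis using v \<open>t\<ge>0\<close> by auto
      next
        case True
        then have "t \<le> u v / (- w v)"
          using \<open>v\<in>S\<close> S unfolding t_def i_def by (auto intro: Min_le)
        then show ?thesis
          unfolding real_0_le_add_iff
          using True neg_le_minus_divide_eq by auto
      qed
    qed
    obtain a where "a \<in> S" and "t = (\<lambda>v. (u v) / (- w v)) a" and "w a < 0"
      using Min_in[OF _ \<open>i\<noteq>{}\<close>] and S(1) unfolding i_def t_def by auto
    then have a: "a \<in> S" "u a + t * w a = 0" by auto
    have *: "\<And>f. sum f (S - {a}) = sum f S - ((f a)::'b::ab_group_add)"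
      unfolding sum.remove[OF S(1) \<open>a\<in>S\<close>] by auto
    have "(\<Sum>v\<in>S. u v + t * w v) = 1"
      by (metis add.right_neutral mult_zero_right sum.distrib sum_distrib_left u(2) wv(1))
    moreover have "(\<Sum>v\<in>S. u v *\<^sub>R v + (t * w v) *\<^sub>R v) - (u a *\<^sub>R a + (t * w a) *\<^sub>R a) = x"
      unfolding sum.distrib u(3) scaleR_scaleR[symmetric] scaleR_right.sum [symmetric] wv(4)
      using a(2) [THEN eq_neg_iff_add_eq_0 [THEN iffD2]] by simp
    ultimately have "?P (n - 1)"
      apply (rule_tac x="(S - {a})" in exI)
      apply (rule_tac x="\<lambda>v. u v + t * w v" in exI)
      using S t a
      apply (auto simp: * scaleR_left_distrib)
      done
    moreover have "n - 1 < n" using S a by (metis Sne card_gt_0_iff diff_less zero_less_one)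
    ultimately show False using smallest by blast
  qed
  then show ?thesis using S Sne pos u by blast
qed

lemma hull_image_weights:
  fixes f :: "'i \<Rightarrow> 'a::real_vector"
  assumes fA: "finite A" and g: "g \<in> convex hull (f ` A)"
  shows "\<exists>l. (\<forall>j\<in>A. 0 \<le> l j) \<and> sum l A = 1 \<and> (\<Sum>j\<in>A. l j *\<^sub>R f j) = g"
proof -
  obtain u where u0: "\<forall>p\<in>f`A. 0 \<le> u p" and u1: "sum u (f`A) = 1" and u2: "(\<Sum>p\<in>f`A. u p *\<^sub>R p) = g"
    using g convex_hull_finite[of "f ` A"] fA by auto
  define c where "c = (\<lambda>p. card {j\<in>A. f j = p})"
  have cpos: "0 < c p" if "p \<in> f`A" for p
    using that fA unfolding c_def by (auto simp: card_gt_0_iff)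
  define l where "l = (\<lambda>j. u (f j) / real (c (f j)))"
  show ?thesis
  proof (intro exI conjI)
    show "\<forall>j\<in>A. 0 \<le> l j" using u0 by (auto simp: l_def)
    have "sum l A = (\<Sum>p\<in>f`A. \<Sum>j\<in>{j\<in>A. f j = p}. l j)"
      using fA by (rule sum.image_gen)
    also have "\<dots> = (\<Sum>p\<in>f`A. \<Sum>j\<in>{j\<in>A. f j = p}. u p / real (c p))"
      by (intro sum.cong refl) (auto simp: l_def)
    also have "\<dots> = (\<Sum>p\<in>f`A. u p)"
      using cpos unfolding c_def by (intro sum.cong refl) auto
    finally show "sum l A = 1" using u1 by simp
    have "(\<Sum>j\<in>A. l j *\<^sub>R f j) = (\<Sum>p\<in>f`A. \<Sum>j\<in>{j\<in>A. f j = p}. l j *\<^sub>R f j)"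
      using fA by (rule sum.image_gen)
    also have "\<dots> = (\<Sum>p\<in>f`A. \<Sum>j\<in>{j\<in>A. f j = p}. (u p / real (c p)) *\<^sub>R p)"
      by (intro sum.cong refl) (auto simp: l_def)
    also have "\<dots> = (\<Sum>p\<in>f`A. u p *\<^sub>R p)"
      using cpos unfolding c_def by (intro sum.cong refl) (auto simp: scaleR_sum_left[symmetric])
    finally show "(\<Sum>j\<in>A. l j *\<^sub>R f j) = g" using u2 by simp
  qed
qed


lemma subdiff_in_hull:
  fixes ct :: "real^'m::finite" and cb :: "real^'n::finite^'m"
  assumes g: "g \<in> subdiff (maxfun ct cb) x"
  shows "g \<in> convex hull ((\<lambda>j. cb $ j) ` {j. cb $ j \<bullet> x + ct $ j = maxfun ct cb x})"
proof (rule ccontr)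
  define M where "M = maxfun ct cb x"
  define A where "A = {j. cb $ j \<bullet> x + ct $ j = M}"
  define S where "S = convex hull ((\<lambda>j. cb $ j) ` A)"
  assume "g \<notin> convex hull ((\<lambda>j. cb $ j) ` {j. cb $ j \<bullet> x + ct $ j = maxfun ct cb x})"
  then have gS: "g \<notin> S" unfolding S_def A_def M_def .
  have "compact S" unfolding S_def by (intro compact_convex_hull finite_imp_compact) simp
  then have "closed S" by (rule compact_imp_closed)
  obtain a b where ab1: "a \<bullet> g < b" and ab2: "\<And>p. p \<in> S \<Longrightarrow> b < a \<bullet> p"
    using separating_hyperplane_closed_point[OF _ \<open>closed S\<close> gS] convex_convex_hull unfolding S_def by blast
  define w where "w = - a"
  have hle: "cb $ j \<bullet> x + ct $ j \<le> M" for j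
    unfolding M_def maxfun_def by (rule Max_ge) auto
  have ev: "\<forall>\<^sub>F t in at_right (0::real). cb $ j \<bullet> (x + t *\<^sub>R w) + ct $ j < M + t * (g \<bullet> w)" for j
  proof (cases "j \<in> A")
    case True
    then have "cb $ j \<in> S" unfolding S_def by (intro hull_inc) auto
    then have "b < a \<bullet> cb $ j" by (rule ab2)
    then have "cb $ j \<bullet> w < g \<bullet> w" using ab1 unfolding w_def by (simp add: inner_commute)
    moreover have "cb $ j \<bullet> x + ct $ j = M" using True unfolding A_def by simp
    ultimately have "cb $ j \<bullet> (x + t *\<^sub>R w) + ct $ j < M + t * (g \<bullet> w)" if "t > 0" for t
    proof -
      have "t * (cb $ j \<bullet> w) < t * (g \<bullet> w)" using that \<open>cb $ j \<bullet> w < g \<bullet> w\<close> by simp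
      then show ?thesis using \<open>cb $ j \<bullet> x + ct $ j = M\<close> by (simp add: inner_add_right)
    qed
    then show ?thesis unfolding eventually_at_right_field by (intro exI[of _ 1]) auto
  next
    case False
    then have lt: "cb $ j \<bullet> x + ct $ j - M < 0" using hle[of j] unfolding A_def by force
    have "((\<lambda>t. cb $ j \<bullet> (x + t *\<^sub>R w) + ct $ j - (M + t * (g \<bullet> w))) \<longlongrightarrow>
           cb $ j \<bullet> (x + 0 *\<^sub>R w) + ct $ j - (M + 0 * (g \<bullet> w))) (at_right 0)"
      by (intro tendsto_intros)
    then have "((\<lambda>t. cb $ j \<bullet> (x + t *\<^sub>R w) + ct $ j - (M + t * (g \<bullet> w))) \<longlongrightarrow>
           cb $ j \<bullet> x + ct $ j - M) (at_right 0)" by simp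
    from order_tendstoD(2)[OF this lt] show ?thesis by (rule eventually_mono) simp
  qed
  have "\<forall>\<^sub>F t in at_right (0::real). (\<forall>j. cb $ j \<bullet> (x + t *\<^sub>R w) + ct $ j < M + t * (g \<bullet> w)) \<and> t > 0"
    by (intro eventually_conj eventually_all_finite ev) (simp add: eventually_at_right_field, intro exI[of _ 1], auto)
  then have "\<exists>t. (\<forall>j. cb $ j \<bullet> (x + t *\<^sub>R w) + ct $ j < M + t * (g \<bullet> w)) \<and> t > 0"
    by (rule eventually_happens'[rotated]) simp
  then obtain t where t1: "\<And>j. cb $ j \<bullet> (x + t *\<^sub>R w) + ct $ j < M + t * (g \<bullet> w)" and t2: "t > 0"
    by blast
  have "maxfun ct cb (x + t *\<^sub>R w) < M + t * (g \<bullet> w)"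
    unfolding maxfun_def using t1 by (subst Max_less_iff) auto
  moreover have "maxfun ct cb (x + t *\<^sub>R w) \<ge> M + g \<bullet> ((x + t *\<^sub>R w) - x)"
    using g unfolding subdiff_def M_def by blast
  ultimately show False by simp
qed


definition cube :: "(real^'n::finite) set" where
  "cube = {x. \<forall>i. x $ i = 0 \<or> x $ i = 1}"

lemma finite_cube: "finite (cube :: (real^'n::finite) set)"
proof -
  have "(cube :: (real^'n) set) \<subseteq> (\<lambda>f. vec_lambda f) ` (UNIV \<rightarrow>\<^sub>E ({0,1} :: real set))"
  proof
    fix x :: "real^'n" assume "x \<in> cube"
    then have "(\<lambda>i. x $ i) \<in> UNIV \<rightarrow>\<^sub>E {0,1}" by (auto simp: cube_def)
    then show "x \<in> (\<lambda>f. vec_lambda f) ` (UNIV \<rightarrow>\<^sub>E ({0,1} :: real set))"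
      by (metis image_eqI vec_lambda_eta)
  qed
  moreover have "finite (UNIV \<rightarrow>\<^sub>E ({0,1} :: real set) :: ('n \<Rightarrow> real) set)"
    by (intro finite_PiE) auto
  ultimately show ?thesis by (metis finite_imageI finite_subset)
qed

definition bad1 :: "(real^'n::finite) set \<Rightarrow> 'm::finite \<Rightarrow> (real^'n \<Rightarrow> 'm) \<Rightarrow> ((real^'m) \<times> (real^'n^'m)) set" where
  "bad1 T j0 \<iota> = {z. \<exists>\<mu>. sum \<mu> T = 1 \<and>
     (\<forall>y\<in>T. fst z $ (\<iota> y) = fst z $ j0 + (snd z $ j0 - snd z $ (\<iota> y)) \<bullet> (\<Sum>w\<in>T. \<mu> w *\<^sub>R w))}"

definition bad2 :: "(real^'n::finite) set \<Rightarrow> real^'n \<Rightarrow> 'm::finite \<Rightarrow> 'm set \<Rightarrow> ((real^'m) \<times> (real^'n^'m)) set" where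
  "bad2 T y0 j1 A = {z. \<exists>lm. lm j1 \<noteq> 0 \<and> sum lm A = 0 \<and>
     (\<forall>y\<in>T. (\<Sum>j\<in>A. lm j *\<^sub>R snd z $ j) \<bullet> (y - y0) = 0)}"

definition badset :: "((real^'m::finite) \<times> (real^'n::finite^'m)) set" where
  "badset = (\<Union>T\<in>{T\<in>Pow cube. T \<noteq> {}}. \<Union>j0\<in>UNIV. \<Union>\<iota>\<in>{\<iota>\<in>T \<rightarrow>\<^sub>E UNIV. inj_on \<iota> T \<and> j0 \<notin> \<iota> ` T}. bad1 T j0 \<iota>)
     \<union> (\<Union>T\<in>{T\<in>Pow cube. \<not> affine_dependent T}. \<Union>y0\<in>T. \<Union>A\<in>{A. card A \<le> card T}. \<Union>j1\<in>A. bad2 T y0 j1 A)"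

lemma negligible_UN_finite:
  assumes "finite I" "\<And>i. i \<in> I \<Longrightarrow> negligible (F i)"
  shows "negligible (\<Union>i\<in>I. F i)"
  using assms by (intro negligible_Union) auto

lemma negligible_badset: "negligible (badset :: ((real^'m::finite) \<times> (real^'n::finite^'m)) set)"
proof -
  have fc: "finite (cube :: (real^'n) set)" by (rule finite_cube)
  have fT: "finite T" if "T \<in> Pow (cube :: (real^'n) set)" for T
    using that fc finite_subset by blast
  have n1: "negligible (\<Union>T\<in>{T\<in>Pow (cube :: (real^'n) set). T \<noteq> {}}. \<Union>j0\<in>(UNIV::'m set).
       \<Union>\<iota>\<in>{\<iota>\<in>T \<rightarrow>\<^sub>E UNIV. inj_on \<iota> T \<and> j0 \<notin> \<iota> ` T}. bad1 T j0 \<iota>)"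
  proof (intro negligible_UN_finite)
    show "finite {T\<in>Pow (cube :: (real^'n) set). T \<noteq> {}}" using fc by simp
    fix T j0 \<iota> assume T: "T \<in> {T\<in>Pow (cube :: (real^'n) set). T \<noteq> {}}"
    show "finite {\<iota>\<in>T \<rightarrow>\<^sub>E (UNIV::'m set). inj_on \<iota> T \<and> j0 \<notin> \<iota> ` T}"
      using T fT by (intro finite_subset[OF _ finite_PiE[of T "\<lambda>_. UNIV"]]) auto
    show "finite (UNIV :: 'm set)" by simp
    assume "\<iota> \<in> {\<iota>\<in>T \<rightarrow>\<^sub>E UNIV. inj_on \<iota> T \<and> j0 \<notin> \<iota> ` T}"
    then show "negligible (bad1 T j0 \<iota>)" unfolding bad1_def
      using T fT by (intro negl_bad1) auto
  qed
  have n2: "negligible (\<Union>T\<in>{T\<in>Pow (cube :: (real^'n) set). \<not> affine_dependent T}. \<Union>y0\<in>T.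
       \<Union>A\<in>{A::'m set. card A \<le> card T}. \<Union>j1\<in>A. bad2 T y0 j1 A)"
  proof (intro negligible_UN_finite)
    show "finite {T\<in>Pow (cube :: (real^'n) set). \<not> affine_dependent T}" using fc by simp
    fix T y0 A j1 assume T: "T \<in> {T\<in>Pow (cube :: (real^'n) set). \<not> affine_dependent T}"
    then show "finite T" using fT by blast
    show "finite {A::'m set. card A \<le> card T}" by simp
    assume "y0 \<in> T" "A \<in> {A::'m set. card A \<le> card T}"
    then show "finite A" by simp
    assume "j1 \<in> A"
    then show "negligible (bad2 T y0 j1 A)" unfolding bad2_def
      using T fT \<open>y0 \<in> T\<close> \<open>A \<in> _\<close> by (intro negl_bad2) auto
  qed
  show ?thesis unfolding badset_def using n1 n2 by simp
qed


lemma sd_props: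
  fixes ct :: "real^'m::finite" and cb :: "real^'n::finite^'m"
  assumes g: "g \<in> sd_set ct cb V x" and fV: "finite V" and T: "T \<subseteq> V" "finite T"
    and u: "\<forall>y\<in>T. 0 < u y" "sum u T = 1" "(\<Sum>y\<in>T. u y *\<^sub>R y) = x"
  shows "g \<in> convex hull ((\<lambda>j. cb $ j) ` {j. cb $ j \<bullet> x + ct $ j = maxfun ct cb x})"
    and "\<And>y. y \<in> T \<Longrightarrow> g \<bullet> (y - x) = 0"
proof -
  show "g \<in> convex hull ((\<lambda>j. cb $ j) ` {j. cb $ j \<bullet> x + ct $ j = maxfun ct cb x})"
    using g unfolding sd_set_def by (intro subdiff_in_hull) blast
  obtain d where d: "d \<in> normal_cone (convex hull V) x" and gd: "g = - d"
    using g unfolding sd_set_def by blast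
  have nonneg: "0 \<le> g \<bullet> (y - x)" if "y \<in> T" for y
  proof -
    have "y \<in> convex hull V" using that T by (intro hull_inc) blast
    then have "d \<bullet> (y - x) \<le> 0" using d unfolding normal_cone_def by blast
    then show ?thesis using gd by simp
  qed
  have "(\<Sum>y\<in>T. u y * (g \<bullet> (y - x))) = g \<bullet> (\<Sum>y\<in>T. u y *\<^sub>R (y - x))"
    by (simp add: inner_sum_right)
  also have "(\<Sum>y\<in>T. u y *\<^sub>R (y - x)) = (\<Sum>y\<in>T. u y *\<^sub>R y) - (\<Sum>y\<in>T. u y) *\<^sub>R x"
    by (simp add: scaleR_diff_right sum_subtractf scaleR_sum_left)
  also have "\<dots> = 0" using u by simp
  finally have sum0: "(\<Sum>y\<in>T. u y * (g \<bullet> (y - x))) = 0" by simp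
  have "\<forall>y\<in>T. u y * (g \<bullet> (y - x)) = 0"
  proof (subst sum_nonneg_eq_0_iff[OF T(2), symmetric])
    show "\<And>y. y \<in> T \<Longrightarrow> 0 \<le> u y * (g \<bullet> (y - x))"
      using nonneg u(1) by (simp add: less_imp_le)
  qed (rule sum0)
  then show "\<And>y. y \<in> T \<Longrightarrow> g \<bullet> (y - x) = 0" using u(1) by force
qed

lemma sd_unique:
  fixes ct :: "real^'m::finite" and cb :: "real^'n::finite^'m"
  assumes nb: "(ct, cb) \<notin> badset" and fV: "finite V" and Vc: "V \<subseteq> cube" and xV: "x \<in> convex hull V"
    and g1: "g1 \<in> sd_set ct cb V x" and g2: "g2 \<in> sd_set ct cb V x"
  shows "g1 = g2"
proof -
  obtain T u where T: "T \<subseteq> V" "finite T" "T \<noteq> {}" "\<not> affine_dependent T"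
    and u: "\<forall>y\<in>T. 0 < u y" "sum u T = 1" "(\<Sum>y\<in>T. u y *\<^sub>R y) = x"
    using min_rep[OF fV xV] by blast
  define M where "M = maxfun ct cb x"
  define A where "A = {j. cb $ j \<bullet> x + ct $ j = M}"
  have TP: "T \<in> Pow cube" using T Vc by blast
  have cardA: "card A \<le> card T"
  proof (rule ccontr)
    assume "\<not> card A \<le> card T"
    then have lt: "card T < card A" by simp
    then obtain j0 where j0: "j0 \<in> A" by (metis card.empty card_gt_0_iff gr_implies_not0 all_not_in_conv)
    have "card T \<le> card (A - {j0})" using lt j0 by (simp add: card_Diff_singleton)
    then obtain \<iota> where \<iota>: "\<iota> ` T \<subseteq> A - {j0}" "inj_on \<iota> T"
      using card_le_inj[of T "A - {j0}"] T(2) by auto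
    define \<iota>' where "\<iota>' = restrict \<iota> T"
    have \<iota>'E: "\<iota>' \<in> T \<rightarrow>\<^sub>E UNIV" unfolding \<iota>'_def by simp
    have inj': "inj_on \<iota>' T" using \<iota>(2) unfolding \<iota>'_def inj_on_def by simp
    have j0': "j0 \<notin> \<iota>' ` T" using \<iota>(1) unfolding \<iota>'_def by auto
    have "(ct, cb) \<in> bad1 T j0 \<iota>'"
      unfolding bad1_def
    proof (intro CollectI exI[of _ u] conjI ballI)
      show "sum u T = 1" by (rule u(2))
      fix y assume y: "y \<in> T"
      then have "\<iota>' y \<in> A" "\<iota>' y = \<iota> y" using \<iota>(1) unfolding \<iota>'_def by auto
      then have "cb $ (\<iota> y) \<bullet> x + ct $ (\<iota> y) = cb $ j0 \<bullet> x + ct $ j0" using j0 unfolding A_def by simp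
      then show "fst (ct, cb) $ \<iota>' y = fst (ct, cb) $ j0 + (snd (ct, cb) $ j0 - snd (ct, cb) $ \<iota>' y) \<bullet> (\<Sum>w\<in>T. u w *\<^sub>R w)"
        using \<open>\<iota>' y = \<iota> y\<close> u(3) by (simp add: inner_diff_left)
    qed
    then have "(ct, cb) \<in> (\<Union>T\<in>{T\<in>Pow cube. T \<noteq> {}}. \<Union>j0\<in>UNIV. \<Union>\<iota>\<in>{\<iota>\<in>T \<rightarrow>\<^sub>E UNIV. inj_on \<iota> T \<and> j0 \<notin> \<iota> ` T}. bad1 T j0 \<iota>)"
      apply -
      apply (rule UN_I[of T]) using TP T(3) apply simp
      apply (rule UN_I[of j0]) apply simp
      apply (rule UN_I[of \<iota>']) using \<iota>'E inj' j0' apply simp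
      by assumption
    then have "(ct, cb) \<in> badset" unfolding badset_def by (rule UnI1)
    then show False using nb by blast
  qed
  have finA: "finite A" by simp
  obtain l1 where l1: "\<forall>j\<in>A. 0 \<le> l1 j" "sum l1 A = 1" "(\<Sum>j\<in>A. l1 j *\<^sub>R cb $ j) = g1"
    using hull_image_weights[OF finA, of g1 "\<lambda>j. cb $ j"] sd_props(1)[OF g1 fV T(1,2) u]
    unfolding A_def M_def by blast
  obtain l2 where l2: "\<forall>j\<in>A. 0 \<le> l2 j" "sum l2 A = 1" "(\<Sum>j\<in>A. l2 j *\<^sub>R cb $ j) = g2"
    using hull_image_weights[OF finA, of g2 "\<lambda>j. cb $ j"] sd_props(1)[OF g2 fV T(1,2) u]
    unfolding A_def M_def by blast
  show "g1 = g2"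
  proof (rule ccontr)
    assume ne: "g1 \<noteq> g2"
    have "\<exists>j1\<in>A. l1 j1 \<noteq> l2 j1"
    proof (rule ccontr)
      assume "\<not> (\<exists>j1\<in>A. l1 j1 \<noteq> l2 j1)"
      then have "(\<Sum>j\<in>A. l1 j *\<^sub>R cb $ j) = (\<Sum>j\<in>A. l2 j *\<^sub>R cb $ j)" by (intro sum.cong) auto
      then show False using ne l1 l2 by simp
    qed
    then obtain j1 where j1: "j1 \<in> A" "l1 j1 \<noteq> l2 j1" by blast
    obtain y0 where y0: "y0 \<in> T" using T(3) by blast
    define lm where "lm = (\<lambda>j. l1 j - l2 j)"
    have "(ct, cb) \<in> bad2 T y0 j1 A"
      unfolding bad2_def
    proof (intro CollectI exI[of _ lm] conjI ballI)
      show "lm j1 \<noteq> 0" using j1 by (simp add: lm_def)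
      show "sum lm A = 0" using l1 l2 by (simp add: lm_def sum_subtractf)
      fix y assume y: "y \<in> T"
      have "(\<Sum>j\<in>A. lm j *\<^sub>R cb $ j) = g1 - g2"
        using l1 l2 by (simp add: lm_def scaleR_diff_left sum_subtractf)
      moreover have "g \<bullet> (y - y0) = 0" if "g \<in> sd_set ct cb V x" for g
      proof -
        have "g \<bullet> (y - x) = 0" "g \<bullet> (y0 - x) = 0"
          using sd_props(2)[OF that fV T(1,2) u] y y0 by auto
        then have "g \<bullet> ((y - x) - (y0 - x)) = 0" by (simp add: inner_diff_right)
        then show ?thesis by simp
      qed
      ultimately show "(\<Sum>j\<in>A. lm j *\<^sub>R snd (ct, cb) $ j) \<bullet> (y - y0) = 0"
        using g1 g2 by (simp add: inner_diff_left)
    qed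
    then have "(ct, cb) \<in> (\<Union>T\<in>{T\<in>Pow cube. \<not> affine_dependent T}. \<Union>y0\<in>T. \<Union>A\<in>{A. card A \<le> card T}. \<Union>j1\<in>A. bad2 T y0 j1 A)"
      apply -
      apply (rule UN_I[of T]) using TP T(4) apply simp
      apply (rule UN_I[of y0]) apply (rule y0)
      apply (rule UN_I[of A]) using cardA apply simp
      apply (rule UN_I[of j1]) apply (rule j1(1))
      by assumption
    then have "(ct, cb) \<in> badset" unfolding badset_def by (rule UnI2)
    then show False using nb by blast
  qed
qed


theorem theorem2:
  fixes X :: "(real^'n::finite) set"
    and ct0 :: "real^'m::finite" and cb0 :: "real^'n^'m"
    and P :: "((real^'m) \<times> (real^'n^'m)) measure"
  assumes "X \<noteq> {}"
    and "X \<subseteq> {x. \<forall>i. x $ i = 0 \<or> x $ i = 1}"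
    and "prob_space P"
    and "sets P = sets borel"
    and "absolutely_continuous lborel P"
  shows "AE y in P.
           (let ct = ct0 + fst y; cb = cb0 + snd y in
            \<forall>N V x c xh. sd_run ct cb X N V x c xh \<longrightarrow>
              (\<forall>k\<in>{1..N}. \<exists>g. sd_set ct cb (V k) (x k) = {g}))"
proof -
  let ?Q = "\<lambda>y. (let ct = ct0 + fst y; cb = cb0 + snd y in
            \<forall>N V x c xh. sd_run ct cb X N V x c xh \<longrightarrow>
              (\<forall>k\<in>{1..N}. \<exists>g. sd_set ct cb (V k) (x k) = {g}))"
  have Xc: "X \<subseteq> cube" using assms(2) unfolding cube_def by blast
  have det: "?Q y" if nb: "(ct0 + fst y, cb0 + snd y) \<notin> badset" for y
    unfolding Let_def
  proof (intro allI impI ballI)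
    fix N V x c xh k
    assume run: "sd_run (ct0 + fst y) (cb0 + snd y) X N V x c xh" and k: "k \<in> {1..N}"
    have Vk: "1 \<le> k \<Longrightarrow> k \<le> N \<Longrightarrow> V k \<subseteq> X \<and> finite (V k)" for k
    proof (induction k)
      case 0 then show ?case by simp
    next
      case (Suc k)
      show ?case
      proof (cases "k = 0")
        case True
        then show ?thesis using run unfolding sd_run_def by simp
      next
        case False
        then have "k \<in> {1..<N}" "k \<in> {1..N}" using Suc.prems by auto
        then have "V (Suc k) = insert (xh k) (V k)" "xh k \<in> X"
          using run unfolding sd_run_def by auto
        moreover have "V k \<subseteq> X \<and> finite (V k)" using Suc.IH False Suc.prems by simp
        ultimately show ?thesis by simp
      qed
    qed
    have VX: "V k \<subseteq> X" "finite (V k)" using Vk k by auto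
    have xk: "x k \<in> convex hull (V k)" and ck: "c k \<in> sd_set (ct0 + fst y) (cb0 + snd y) (V k) (x k)"
      using run k unfolding sd_run_def by auto
    have "sd_set (ct0 + fst y) (cb0 + snd y) (V k) (x k) = {c k}"
    proof
      show "{c k} \<subseteq> sd_set (ct0 + fst y) (cb0 + snd y) (V k) (x k)" using ck by simp
      show "sd_set (ct0 + fst y) (cb0 + snd y) (V k) (x k) \<subseteq> {c k}"
      proof
        fix g assume "g \<in> sd_set (ct0 + fst y) (cb0 + snd y) (V k) (x k)"
        then have "g = c k" using sd_unique[OF nb VX(2) _ xk _ ck] VX(1) Xc by blast
        then show "g \<in> {c k}" by simp
      qed
    qed
    then show "\<exists>g. sd_set (ct0 + fst y) (cb0 + snd y) (V k) (x k) = {g}" by blast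
  qed
  define B' where "B' = (+) (- (ct0, cb0)) ` (badset :: ((real^'m) \<times> (real^'n^'m)) set)"
  have "negligible B'" unfolding B'_def by (intro negligible_translation negligible_badset)
  then have "B' \<in> null_sets (completion lborel)" by (simp add: negligible_iff_null_sets)
  then obtain N' where N': "N' \<in> null_sets lborel" "B' \<subseteq> N'"
    unfolding null_sets_completion_iff2 by blast
  have NP: "N' \<in> null_sets P" using N'(1) assms(5) unfolding absolutely_continuous_def by blast
  have sub: "{y \<in> space P. \<not> ?Q y} \<subseteq> N'"
  proof
    fix y assume "y \<in> {y \<in> space P. \<not> ?Q y}"
    then have "(ct0 + fst y, cb0 + snd y) \<in> badset" using det by blast
    moreover have "y = - (ct0, cb0) + (ct0 + fst y, cb0 + snd y)" by (simp add: prod_eq_iff)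
    ultimately have "y \<in> B'" unfolding B'_def by (metis image_eqI)
    then show "y \<in> N'" using N'(2) by blast
  qed
  show ?thesis by (rule AE_I'[OF NP sub])
qed

end
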